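(* Let $q=2^h$, $m\ge1$, and on $\mathbb{F}_q^{2m}$ let $\langle u,v\rangle=uFv^T$ with $F=\begin{pmatrix}0&I_m\\ I_m&0\end{pmatrix}$, $\vartheta_0(u)=uEu^T$ with $E=\begin{pmatrix}0&I_m\\0&0\end{pmatrix}$, and $\vartheta_a(u)=\vartheta_0(u)+\langle a,u\rangle^2$. Let $W^+=\{a\in\mathbb{F}_q^{2m}:\mathrm{Tr}_{\mathbb{F}_q/\mathbb{F}_2}(\vartheta_0(a))=0\}$, $W^-=\{a\in\mathbb{F}_q^{2m}:\mathrm{Tr}_{\mathbb{F}_q/\mathbb{F}_2}(\vartheta_0(a))=1\}$, and $F=\{(a,b)\in W^\pm\times W^\pm:\vartheta_a(a+b)=0,\ a\ne b\}$. Then the graph $(W^\pm,F)$ is isomorphic to $NO^{\pm}(2m+1,q)$.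
   Context: $NO^{\pm}(2m+1,q)$ ($q$ even): take a non-singular parabolic quadric $Q(2m,q)$ in $PG(2m,q)$ (zero set of a quadratic form on $\mathbb{F}_q^{2m+1}$ of maximal Witt index $m$), whose polar form has a 1-dimensional radical spanning the nucleus $N$. The vertices are the hyperplanes $H$ with $N\notin H$ such that $H\cap Q(2m,q)$ is a non-singular quadric in $H$ of type $\pm1$ (hyperbolic/elliptic); two vertices $H_1,H_2$ are adjacent iff $H_1\cap H_2\cap Q(2m,q)$ is degenerate (singular in $H_1\cap H_2$). *)

theory Defs
  imports "HOL-Analysis.Analysis"
begin

section \<open>Ambient vector spaces over a finite field\<close>

text \<open>F_q^{2m} is modelled as 'a ^ ('m + 'm), with m = CARD('m); coordinate Inl i is
  position i and Inr i is position m+i (i = 1..m).  F_q^{2m+1} is modelled as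
  'a ^ (('m + 'm) + unit), the extra coordinate being Inr ().\<close>

text \<open>The bilinear expression u M v^T.\<close>
definition bform :: "'a::field ^ 'n ^ 'n \<Rightarrow> 'a ^ 'n \<Rightarrow> 'a ^ 'n \<Rightarrow> 'a" where
  "bform M u v = (\<Sum>i\<in>UNIV. (u v* M) $ i * v $ i)"

text \<open>E = (0 I_m; 0 0) and F = (0 I_m; I_m 0).\<close>
definition matE :: "'a::field ^ ('m::finite + 'm) ^ ('m + 'm)" where
  "matE = (\<chi> i j. if (\<exists>k. i = Inl k \<and> j = Inr k) then 1 else 0)"

definition matF :: "'a::field ^ ('m::finite + 'm) ^ ('m + 'm)" where
  "matF = (\<chi> i j. if (\<exists>k. (i = Inl k \<and> j = Inr k) \<or> (i = Inr k \<and> j = Inl k)) then 1 else 0)"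

definition pairing :: "'a::field ^ ('m::finite + 'm) \<Rightarrow> 'a ^ ('m + 'm) \<Rightarrow> 'a" where
  "pairing u v = bform matF u v"

definition theta0 :: "'a::field ^ ('m::finite + 'm) \<Rightarrow> 'a" where
  "theta0 u = bform matE u u"

definition theta :: "'a::field ^ ('m::finite + 'm) \<Rightarrow> 'a ^ ('m + 'm) \<Rightarrow> 'a" where
  "theta a u = theta0 u + (pairing a u)^2"

text \<open>Absolute trace Tr_{F_q/F_2}(x) = x + x^2 + ... + x^(2^(h-1)), where q = 2^h.\<close>
definition trace2 :: "nat \<Rightarrow> 'a::field \<Rightarrow> 'a" where
  "trace2 h x = (\<Sum>i<h. x ^ (2 ^ i))"

text \<open>W^+ (s = True, trace 0) and W^- (s = False, trace 1).\<close>
definition Wset :: "nat \<Rightarrow> bool \<Rightarrow> ('a::field ^ ('m::finite + 'm)) set" where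
  "Wset h s = {a. trace2 h (theta0 a) = (if s then 0 else 1)}"

definition Fedges :: "nat \<Rightarrow> bool \<Rightarrow> (('a::field ^ ('m::finite + 'm)) \<times> ('a ^ ('m + 'm))) set" where
  "Fedges h s = {(a, b). a \<in> Wset h s \<and> b \<in> Wset h s \<and> theta a (a + b) = 0 \<and> a \<noteq> b}"

section \<open>The graph NO^{\<plusminus>}(2m+1,q)\<close>

text \<open>The standard non-singular parabolic quadratic form on F_q^{2m+1}:
  Q(x_1..x_m, y_1..y_m, z) = x_1 y_1 + ... + x_m y_m + z^2 (maximal Witt index m).\<close>
definition Qpar :: "'a::field ^ (('m::finite + 'm) + unit) \<Rightarrow> 'a" where
  "Qpar v = (\<Sum>k\<in>UNIV. v $ Inl (Inl k) * v $ Inl (Inr k)) + (v $ Inr ()) ^ 2"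

text \<open>Polar form of a quadratic form.\<close>
definition polar :: "('v::ab_group_add \<Rightarrow> 'a::field) \<Rightarrow> 'v \<Rightarrow> 'v \<Rightarrow> 'a" where
  "polar Q u v = Q (u + v) - Q u - Q v"

text \<open>The nucleus N is the (1-dimensional) radical of the polar form; N not in H.\<close>
definition nucleus_not_in :: "('a::field ^ 'n \<Rightarrow> 'a) \<Rightarrow> ('a ^ 'n) set \<Rightarrow> bool" where
  "nucleus_not_in Q H = (\<exists>n. (\<forall>w. polar Q n w = 0) \<and> n \<notin> H)"

text \<open>Hyperplanes of PG(n-1,q), as (n-1)-dimensional subspaces of F_q^n.\<close>
definition hyperplane :: "('a::field ^ 'n::finite) set \<Rightarrow> bool" where
  "hyperplane H = (vec.subspace H \<and> vec.dim H = CARD('n) - 1)"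

text \<open>The quadric Q restricted to a subspace S is singular (degenerate): it has a singular
  point, i.e. a nonzero singular vector of S lying in the radical of the polar form on S.\<close>
definition singular_on :: "('a::field ^ 'n \<Rightarrow> 'a) \<Rightarrow> ('a ^ 'n) set \<Rightarrow> bool" where
  "singular_on Q S = (\<exists>u\<in>S. u \<noteq> 0 \<and> Q u = 0 \<and> (\<forall>w\<in>S. polar Q u w = 0))"

definition totally_singular_dim :: "('a::field ^ 'n::finite \<Rightarrow> 'a) \<Rightarrow> ('a ^ 'n) set \<Rightarrow> nat \<Rightarrow> bool" where
  "totally_singular_dim Q H d =
     (\<exists>U. vec.subspace U \<and> U \<subseteq> H \<and> vec.dim U = d \<and> (\<forall>u\<in>U. Q u = 0))"

text \<open>Type of a non-singular quadric in a 2m-dimensional space H (projective dimension 2m-1):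
  hyperbolic (+1) iff Witt index m, elliptic (-1) iff Witt index m-1.\<close>
definition quadric_type :: "('a::field ^ 'n::finite \<Rightarrow> 'a) \<Rightarrow> ('a ^ 'n) set \<Rightarrow> nat \<Rightarrow> bool \<Rightarrow> bool" where
  "quadric_type Q H m s =
     (if s then totally_singular_dim Q H m
      else totally_singular_dim Q H (m - 1) \<and> \<not> totally_singular_dim Q H m)"

definition NO_vertices :: "bool \<Rightarrow> ('a::field ^ (('m::finite + 'm) + unit)) set set" where
  "NO_vertices s = {H. hyperplane H \<and> nucleus_not_in Qpar H \<and> \<not> singular_on Qpar H
                        \<and> quadric_type Qpar H CARD('m) s}"

definition NO_adj :: "('a::field ^ (('m::finite + 'm) + unit)) set \<Rightarrow> ('a ^ (('m + 'm) + unit)) set \<Rightarrow> bool" where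
  "NO_adj H1 H2 = singular_on Qpar (H1 \<inter> H2)"

text \<open>Graph isomorphism between (V1, E1) (edges as ordered pairs) and (V2, adj2).\<close>
definition graph_iso :: "'u set \<Rightarrow> ('u \<times> 'u) set \<Rightarrow> 'w set \<Rightarrow> ('w \<Rightarrow> 'w \<Rightarrow> bool) \<Rightarrow> bool" where
  "graph_iso V1 E1 V2 adj2 =
     (\<exists>f. bij_betw f V1 V2 \<and> (\<forall>a\<in>V1. \<forall>b\<in>V1. (a, b) \<in> E1 \<longleftrightarrow> adj2 (f a) (f b)))"

end

theory Submission
  imports Defs "HOL-Number_Theory.Residues" "HOL-Computational_Algebra.Polynomial" "HOL-Library.Cardinality"
begin


lemma two_eq_zero_card:
  assumes "CARD('a::{field,finite}) = 2 ^ h"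
  shows "(2::'a) = 0"
proof -
  have pos: "CHAR('a) > 0" by (rule finite_imp_CHAR_pos) simp
  have pr: "prime CHAR('a)" using prime_CHAR_semidom[OF pos] .
  have "CHAR('a) dvd 2 ^ h" using CHAR_dvd_CARD[where 'a='a] assms by simp
  then have "CHAR('a) dvd 2" using pr prime_dvd_power by blast
  then have "CHAR('a) = 2" using pr
    using primes_dvd_imp_eq two_is_prime_nat by blast
  then show ?thesis using of_nat_CHAR[where 'a='a] by simp
qed

lemma h_pos_card:
  assumes "CARD('a::{field,finite}) = 2 ^ h"
  shows "h \<ge> 1"
proof (rule ccontr)
  assume "\<not> h \<ge> 1"
  then have "CARD('a) = 1" using assms by simp
  then obtain z :: 'a where "UNIV = {z}" using card_1_singletonE by blast
  then have "(0::'a) = 1" by (metis UNIV_I singletonD)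
  then show False by simp
qed

lemma power_card_same:
  fixes x :: "'a :: {field,finite}"
  shows "x ^ CARD('a) = x"
proof (cases "x = 0")
  case False
  have "x * (\<Prod>y\<in>UNIV-{0}. x * y) = x * x ^ (card (UNIV :: 'a set) - 1) * \<Prod>(UNIV-{0})"
    by (simp add: prod.distrib mult_ac)
  also have "x * x ^ (card (UNIV :: 'a set) - 1) = x ^ Suc (card (UNIV :: 'a set) - 1)"
    by (subst power_Suc) auto
  also have "Suc (card (UNIV :: 'a set) - 1) = card (UNIV :: 'a set)"
    using finite_UNIV_card_ge_0[where ?'a = 'a] by simp
  also have "(\<Prod>y\<in>UNIV-{0}. x * y) = (\<Prod>y\<in>UNIV-{0}. y)"
    by (rule prod.reindex_bij_witness[of _ "\<lambda>y. y / x" "\<lambda>y. x * y"]) (use False in auto)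
  finally show ?thesis
    by simp
qed (use finite_UNIV_card_ge_0[where ?'a = 'a] in auto)

lemma c2_add_self: "(2::'a::comm_ring_1) = 0 \<Longrightarrow> x + x = (0::'a)"
  by (metis mult_2 mult_zero_left)

lemma c2_minus: "(2::'a::comm_ring_1) = 0 \<Longrightarrow> - x = (x::'a)"
  by (metis c2_add_self add.inverse_unique)

lemma c2_diff: "(2::'a::comm_ring_1) = 0 \<Longrightarrow> x - y = x + (y::'a)"
  by (metis c2_minus diff_conv_add_uminus)

lemma c2_sq_add: "(2::'a::comm_ring_1) = 0 \<Longrightarrow> (x + y)^2 = x^2 + (y::'a)^2"
  by (simp add: power2_sum)

lemma c2_pow2_add: "(2::'a::comm_ring_1) = 0 \<Longrightarrow> (x + y)^(2^i) = x^(2^i) + (y::'a)^(2^i)"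
proof (induction i)
  case 0 then show ?case by simp
next
  case (Suc i)
  have "(x + y)^(2^Suc i) = ((x+y)^(2^i))^2" by (simp add: power_mult[symmetric] mult.commute)
  also have "\<dots> = (x^(2^i))^2 + (y^(2^i))^2" using Suc by (simp add: c2_sq_add)
  also have "\<dots> = x^(2^Suc i) + y^(2^Suc i)" by (simp add: power_mult[symmetric] mult.commute)
  finally show ?case .
qed

lemma c2_sum_sq: "(2::'a::comm_ring_1) = 0 \<Longrightarrow> (\<Sum>i\<in>I. f i)^2 = (\<Sum>i\<in>I. (f i::'a)^2)"
  by (induction I rule: infinite_finite_induct) (auto simp: c2_sq_add)

lemma c2_sq_sum_mult: "(2::'a::comm_ring_1) = 0 \<Longrightarrow> (c * x)^2 = c^2 * (x::'a)^2"
  by (simp add: power_mult_distrib)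

lemma trace_add: "(2::'a::field) = 0 \<Longrightarrow> trace2 h (x + y) = trace2 h x + trace2 h (y::'a)"
  unfolding trace2_def by (simp add: c2_pow2_add sum.distrib)

lemma trace_sq:
  assumes "CARD('a::{field,finite}) = 2 ^ h"
  shows "trace2 h ((x::'a)^2) = trace2 h x"
proof -
  obtain n where hn: "h = Suc n" using h_pos_card[OF assms] by (cases h) auto
  have xq: "x ^ (2^h) = x" using power_card_same[of x] assms by simp
  have e: "\<And>i. (x^2)^(2^i) = x^(2^Suc i)" by (simp add: power_mult[symmetric] mult.commute)
  have "trace2 h (x^2) = (\<Sum>i<n. x^(2^Suc i)) + x^(2^Suc n)"
    unfolding trace2_def hn by (simp add: e)
  also have "\<dots> = x^(2^0) + (\<Sum>i<n. x^(2^Suc i))" using xq hn by simp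
  also have "\<dots> = trace2 h x" unfolding trace2_def hn sum.lessThan_Suc_shift by simp
  finally show ?thesis .
qed

lemma trace_sq_self:
  assumes "CARD('a::{field,finite}) = 2 ^ h"
  shows "(trace2 h (x::'a))^2 = trace2 h x"
proof -
  have two: "(2::'a) = 0" by (rule two_eq_zero_card[OF assms])
  have "(trace2 h x)^2 = (\<Sum>i<h. (x^(2^i))^2)" unfolding trace2_def by (rule c2_sum_sq[OF two])
  also have "\<dots> = trace2 h (x^2)" unfolding trace2_def by (simp add: power_mult[symmetric] mult.commute)
  finally show ?thesis using trace_sq[OF assms] by simp
qed

lemma trace_01:
  assumes "CARD('a::{field,finite}) = 2 ^ h"
  shows "trace2 h (x::'a) = 0 \<or> trace2 h x = 1"
proof -
  have "trace2 h x * (trace2 h x - 1) = 0" using trace_sq_self[OF assms, of x]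
    by (simp add: algebra_simps power2_eq_square)
  then show ?thesis by auto
qed

lemma trace_exists_one:
  assumes "CARD('a::{field,finite}) = 2 ^ h"
  shows "\<exists>x::'a. trace2 h x = 1"
proof (rule ccontr)
  assume "\<not> ?thesis"
  then have all0: "\<And>x::'a. trace2 h x = 0" using trace_01[OF assms] by blast
  obtain n where hn: "h = Suc n" using h_pos_card[OF assms] by (cases h) auto
  define p :: "'a poly" where "p = (\<Sum>i<h. Polynomial.monom 1 (2^i))"
  have pe: "poly p x = trace2 h x" for x unfolding p_def trace2_def by (simp add: poly_sum poly_monom)
  have cp: "Polynomial.coeff p (2^n) = 1"
  proof -
    have "Polynomial.coeff p (2^n) = (\<Sum>i<h. if 2^i = (2::nat)^n then 1 else 0)"
      unfolding p_def by (simp add: coeff_sum coeff_monom)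
    also have "\<dots> = (\<Sum>i<h. if i = n then 1 else 0)" by simp
    also have "\<dots> = 1" using hn by simp
    finally show ?thesis .
  qed
  then have p0: "p \<noteq> 0" by auto
  have dg: "degree p \<le> 2^n"
    unfolding p_def
  proof (rule degree_sum_le)
    fix i assume "i \<in> {..<h}"
    then have "i \<le> n" using hn by simp
    then have "(2::nat)^i \<le> 2^n" by simp
    then show "degree (Polynomial.monom (1::'a) (2^i)) \<le> 2^n" using degree_monom_le order_trans by blast
  qed simp
  have "card {x. poly p x = 0} \<le> degree p" by (rule card_poly_roots_bound[OF p0])
  also have "{x. poly p x = 0} = (UNIV :: 'a set)" using all0 pe by auto
  finally have "2^h \<le> degree p" using assms by simp
  with dg have "2^h \<le> (2::nat)^n" by linarith
  then show False using hn by (simp del: power_Suc)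
qed

lemma trace_zero_AS:
  assumes "CARD('a::{field,finite}) = 2 ^ h" and "trace2 h (x::'a) = 0"
  shows "\<exists>\<mu>. \<mu>^2 + \<mu> = x"
proof -
  have two: "(2::'a) = 0" by (rule two_eq_zero_card[OF assms(1)])
  obtain x1 :: 'a where x1: "trace2 h x1 = 1" using trace_exists_one[OF assms(1)] by blast
  define K where "K = {y::'a. trace2 h y = 0}"
  have "bij_betw (\<lambda>y. y + x1) K (UNIV - K)"
  proof (rule bij_betw_byWitness[where f'="\<lambda>y. y + x1"])
    show "\<forall>a\<in>K. a + x1 + x1 = a" using c2_add_self[OF two] by (simp add: add.assoc)
    show "\<forall>a\<in>UNIV - K. a + x1 + x1 = a" using c2_add_self[OF two] by (simp add: add.assoc)
    show "(\<lambda>y. y + x1) ` K \<subseteq> UNIV - K" using x1 by (auto simp: K_def trace_add[OF two])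
    show "(\<lambda>y. y + x1) ` (UNIV - K) \<subseteq> K"
    proof
      fix z assume "z \<in> (\<lambda>y. y + x1) ` (UNIV - K)"
      then obtain y where y: "y \<notin> K" "z = y + x1" by auto
      then have "trace2 h y = 1" using trace_01[OF assms(1), of y] by (auto simp: K_def)
      then show "z \<in> K" using y x1 by (simp add: K_def trace_add[OF two] c2_add_self[OF two])
    qed
  qed
  then have "card K = card (UNIV - K)" by (rule bij_betw_same_card)
  also have "\<dots> = CARD('a) - card K" by (simp add: card_Diff_subset)
  finally have cK: "2 * card K = CARD('a)" by linarith
  define S where "S = range (\<lambda>y::'a. y^2 + y)"
  have SK: "S \<subseteq> K" unfolding S_def K_def
    by (auto simp: trace_add[OF two] trace_sq[OF assms(1)] c2_add_self[OF two])
  have "(UNIV::'a set) = (\<Union>s\<in>S. {y. y^2 + y = s})" unfolding S_def by auto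
  then have "CARD('a) \<le> (\<Sum>s\<in>S. card {y. y^2 + y = s})" by (metis card_UN_le finite)
  also have "\<dots> \<le> (\<Sum>s\<in>S. 2)"
  proof (rule sum_mono)
    fix s assume "s \<in> S"
    then obtain y0 where y0: "s = y0^2 + y0" unfolding S_def by auto
    have "{y. y^2 + y = s} \<subseteq> {y0, y0 + 1}"
    proof
      fix y assume "y \<in> {y. y^2 + y = s}"
      then have "y^2 + y = y0^2 + y0" using y0 by simp
      have e: "(y + y0) * (y + y0 + 1) = (y^2 + y) + (y0^2 + y0) + 2 * (y * y0)"
        by (simp add: algebra_simps power2_eq_square)
      have "(y + y0) * (y + y0 + 1) = 0"
        unfolding e using `y^2 + y = y0^2 + y0` two by (simp add: c2_add_self[OF two])
      then have "y + y0 = 0 \<or> y + y0 + 1 = 0" by simp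
      moreover have "y + y0 = 0 \<Longrightarrow> y = y0" by (metis c2_minus[OF two] add_eq_0_iff)
      moreover have "y + y0 + 1 = 0 \<Longrightarrow> y = y0 + 1"
        by (metis c2_minus[OF two] add_eq_0_iff add.assoc add.commute)
      ultimately show "y \<in> {y0, y0 + 1}" by auto
    qed
    then have "card {y. y^2 + y = s} \<le> card {y0, y0 + 1}" by (intro card_mono) auto
    also have "\<dots> \<le> 2" by (simp add: card_insert_if)
    finally show "card {y. y^2 + y = s} \<le> 2" .
  qed
  finally have "CARD('a) \<le> 2 * card S" by simp
  then have "card K \<le> card S" using cK by simp
  then have "S = K" using SK card_seteq finite by blast
  then have "x \<in> S" using assms(2) K_def by auto
  then show ?thesis unfolding S_def by auto
qed



lemma sum_UNIV_plus: "(\<Sum>i\<in>(UNIV::('m::finite + 'n::finite) set). f i) = (\<Sum>k\<in>UNIV. f (Inl k)) + (\<Sum>k\<in>UNIV. f (Inr k))"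
proof -
  have "(\<Sum>i\<in>(UNIV::('m + 'n) set). f i) = (\<Sum>i\<in>(UNIV <+> UNIV). f i)" by simp
  also have "\<dots> = (\<Sum>k\<in>UNIV. f (Inl k)) + (\<Sum>k\<in>UNIV. f (Inr k))"
    by (subst sum.Plus) (auto simp: comp_def)
  finally show ?thesis .
qed

lemma mult_if01: "(x::'a::comm_ring_1) * (if P then 1 else 0) = (if P then x else 0)"
  "(if P then 1 else 0) * (x::'a) = (if P then x else 0)" by auto

lemma pairing_eq: "pairing (u::'a::field^('m::finite+'m)) v = (\<Sum>k\<in>UNIV. u$Inl k * v$Inr k + u$Inr k * v$Inl k)"
proof -
  have inner: "(u v* matF) $ j = (case j of Inl k \<Rightarrow> u $ Inr k | Inr k \<Rightarrow> u $ Inl k)" for j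
  proof (cases j)
    case (Inl k)
    have "(u v* matF) $ j = (\<Sum>i\<in>UNIV. (if \<exists>k'. (i = Inl k' \<and> j = Inr k') \<or> (i = Inr k' \<and> j = Inl k') then 1 else 0) * u $ i)"
      by (simp add: vector_matrix_mult_def matF_def mult.commute)
    also have "\<dots> = u $ Inr k" using Inl by (simp add: sum_UNIV_plus mult_if01)
    finally show ?thesis using Inl by simp
  next
    case (Inr k)
    have "(u v* matF) $ j = (\<Sum>i\<in>UNIV. (if \<exists>k'. (i = Inl k' \<and> j = Inr k') \<or> (i = Inr k' \<and> j = Inl k') then 1 else 0) * u $ i)"
      by (simp add: vector_matrix_mult_def matF_def mult.commute)
    also have "\<dots> = u $ Inl k" using Inr by (simp add: sum_UNIV_plus mult_if01)
    finally show ?thesis using Inr by simp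
  qed
  show ?thesis unfolding pairing_def bform_def
    by (simp add: inner sum_UNIV_plus sum.distrib add.commute)
qed

lemma theta0_eq: "theta0 (u::'a::field^('m::finite+'m)) = (\<Sum>k\<in>UNIV. u$Inl k * u$Inr k)"
proof -
  have inner: "(u v* matE) $ j = (case j of Inl k \<Rightarrow> 0 | Inr k \<Rightarrow> u $ Inl k)" for j
  proof (cases j)
    case (Inl k)
    then show ?thesis by (simp add: vector_matrix_mult_def matE_def sum_UNIV_plus mult_if01)
  next
    case (Inr k)
    then show ?thesis by (simp add: vector_matrix_mult_def matE_def sum_UNIV_plus mult_if01)
  qed
  show ?thesis unfolding theta0_def bform_def
    by (simp add: inner sum_UNIV_plus)
qed

lemma pairing_add1: "pairing (u + v) w = pairing u w + pairing v (w::'a::field^('m::finite+'m))"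
  by (simp add: pairing_eq sum.distrib[symmetric] algebra_simps)
lemma pairing_add2: "pairing w (u + v) = pairing w u + pairing w (v::'a::field^('m::finite+'m))"
  by (simp add: pairing_eq sum.distrib[symmetric] algebra_simps)
lemma pairing_scale1: "pairing (c *s u) w = c * pairing u (w::'a::field^('m::finite+'m))"
  by (simp add: pairing_eq sum_distrib_left algebra_simps)
lemma pairing_scale2: "pairing w (c *s u) = c * pairing w (u::'a::field^('m::finite+'m))"
  by (simp add: pairing_eq sum_distrib_left algebra_simps)
lemma pairing_sym: "pairing u w = pairing w (u::'a::field^('m::finite+'m))"
  by (simp add: pairing_eq algebra_simps)
lemma pairing_zero1[simp]: "pairing 0 (w::'a::field^('m::finite+'m)) = 0"
  by (simp add: pairing_eq)
lemma pairing_zero2[simp]: "pairing w (0::'a::field^('m::finite+'m)) = 0"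
  by (simp add: pairing_eq)
lemma pairing_self: "(2::'a::field) = 0 \<Longrightarrow> pairing u (u::'a^('m::finite+'m)) = 0"
proof -
  assume two: "(2::'a) = 0"
  have "pairing u u = (\<Sum>k\<in>UNIV. 2 * (u$Inl k * u$Inr k))" by (simp add: pairing_eq algebra_simps)
  then show ?thesis using two by simp
qed

lemma theta0_add: "theta0 (u + v) = theta0 u + theta0 v + pairing u (v::'a::field^('m::finite+'m))"
  by (simp add: theta0_eq pairing_eq sum.distrib[symmetric] algebra_simps)
lemma theta0_scale: "theta0 (c *s u) = c^2 * theta0 (u::'a::field^('m::finite+'m))"
  by (simp add: theta0_eq sum_distrib_left algebra_simps power2_eq_square)
lemma theta0_zero[simp]: "theta0 (0::'a::field^('m::finite+'m)) = 0"
  by (simp add: theta0_eq)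

lemma theta_add: "(2::'a::field) = 0 \<Longrightarrow> theta a (u + v) = theta a u + theta a v + pairing u (v::'a^('m::finite+'m))"
  by (simp add: theta_def theta0_add pairing_add2 c2_sq_add algebra_simps)
lemma theta_scale: "theta a (c *s u) = c^2 * theta a (u::'a::field^('m::finite+'m))"
  by (simp add: theta_def theta0_scale pairing_scale2 algebra_simps power_mult_distrib)
lemma theta_zero_vec: "theta 0 u = theta0 (u::'a::field^('m::finite+'m))"
  by (simp add: theta_def)

lemma pairing_axis_Inr: "pairing u (axis (Inr k) 1) = (u::'a::field^('m::finite+'m)) $ Inl k"
proof -
  have "pairing u (axis (Inr k) 1) = (\<Sum>k'\<in>UNIV. if k' = k then u $ Inl k' else 0)"
    unfolding pairing_eq by (intro sum.cong) (auto simp: axis_def)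
  then show ?thesis by simp
qed
lemma pairing_axis_Inl: "pairing u (axis (Inl k) 1) = (u::'a::field^('m::finite+'m)) $ Inr k"
proof -
  have "pairing u (axis (Inl k) 1) = (\<Sum>k'\<in>UNIV. if k' = k then u $ Inr k' else 0)"
    unfolding pairing_eq by (intro sum.cong) (auto simp: axis_def)
  then show ?thesis by simp
qed

lemma pairing_nondeg: "(\<And>w. pairing u w = 0) \<Longrightarrow> u = (0::'a::field^('m::finite+'m))"
proof -
  assume A: "\<And>w. pairing u w = 0"
  show "u = 0"
  proof (rule vec_eq_iff[THEN iffD2], rule allI)
    fix i show "u $ i = 0 $ i"
    proof (cases i)
      case (Inl k) then show ?thesis using A[of "axis (Inr k) 1"] by (simp add: pairing_axis_Inr)
    next
      case (Inr k) then show ?thesis using A[of "axis (Inl k) 1"] by (simp add: pairing_axis_Inl)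
    qed
  qed
qed

lemma pairing_nondeg_ex: "u \<noteq> 0 \<Longrightarrow> \<exists>w. pairing w (u::'a::field^('m::finite+'m)) \<noteq> 0"
  using pairing_nondeg pairing_sym by metis

lemma pairing_determines: "(\<And>u. pairing a u = pairing b u) \<Longrightarrow> a = (b::'a::field^('m::finite+'m))"
proof -
  assume A: "\<And>u. pairing a u = pairing b u"
  have "pairing (a - b) u = 0" for u
    using A[of u] pairing_add1[of a "-b" u] pairing_scale1[of "-1" b u] by (simp add: scaleR_conv_of_real)
  then show ?thesis using pairing_nondeg[of "a - b"] by simp
qed



lemma card_subspace:
  fixes U :: "('a::{field,finite}^'n) set"
  assumes "vec.subspace U"
  shows "card U = CARD('a) ^ vec.dim U"
proof -
  obtain B where B: "B \<subseteq> U" "vec.independent B" "U \<subseteq> vec.span B" "card B = vec.dim U"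
    using vec.basis_exists by blast
  have fB: "finite B" by (rule finite_subset[OF subset_UNIV]) simp
  have UB: "vec.span B = U" using vec.span_subspace[OF B(1) B(3) assms] .
  define g where "g c = (\<Sum>v\<in>B. c v *s v)" for c :: "_ \<Rightarrow> 'a"
  have "bij_betw g (B \<rightarrow>\<^sub>E (UNIV::'a set)) U"
  proof (rule bij_betwI')
    fix x y assume x: "x \<in> B \<rightarrow>\<^sub>E (UNIV::'a set)" and y: "y \<in> B \<rightarrow>\<^sub>E (UNIV::'a set)"
    show "(g x = g y) = (x = y)"
    proof
      assume e: "g x = g y"
      have "(\<Sum>v\<in>B. (x v - y v) *s v) = (\<Sum>v\<in>B. x v *s v - y v *s v)"
        by (intro sum.cong refl) (rule vector_sub_rdistrib)
      also have "\<dots> = g x - g y" unfolding g_def by (rule sum_subtractf)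
      finally have s0: "(\<Sum>v\<in>B. (x v - y v) *s v) = 0" using e by simp
      have nd: "\<not> (\<exists>u. (\<exists>v\<in>B. u v \<noteq> 0) \<and> (\<Sum>v\<in>B. u v *s v) = 0)"
        using B(2) vec.dependent_finite[OF fB] by simp
      have "\<forall>v\<in>B. x v - y v = 0"
      proof (rule ccontr)
        assume "\<not> (\<forall>v\<in>B. x v - y v = 0)"
        then obtain v where "v \<in> B" "x v - y v \<noteq> 0" by blast
        then have "\<exists>u. (\<exists>v\<in>B. u v \<noteq> 0) \<and> (\<Sum>v\<in>B. u v *s v) = 0"
          using s0 by (intro exI[of _ "\<lambda>v. x v - y v"]) blast
        with nd show False by blast
      qed
      then show "x = y" using x y by (intro PiE_ext) auto
    qed simp
  next
    fix x assume "x \<in> B \<rightarrow>\<^sub>E (UNIV::'a set)"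
    have "g x \<in> range (\<lambda>u. \<Sum>v\<in>B. u v *s v)" unfolding g_def by (rule rangeI)
    then show "g x \<in> U" using vec.span_finite[OF fB] UB by simp
  next
    fix y assume "y \<in> U"
    then have "y \<in> range (\<lambda>u. \<Sum>v\<in>B. u v *s v)" using vec.span_finite[OF fB] UB by simp
    then obtain u where "y = (\<Sum>v\<in>B. u v *s v)" by blast
    moreover have "(\<Sum>v\<in>B. restrict u B v *s v) = (\<Sum>v\<in>B. u v *s v)" by (rule sum.cong) auto
    ultimately have "y = g (restrict u B)" unfolding g_def by simp
    then show "\<exists>x\<in>B \<rightarrow>\<^sub>E UNIV. y = g x" by (intro bexI[of _ "restrict u B"]) auto
  qed
  then have "card U = card (B \<rightarrow>\<^sub>E (UNIV::'a set))" by (simp add: bij_betw_same_card)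
  also have "\<dots> = CARD('a) ^ card B" using card_PiE[OF fB, of "\<lambda>_. UNIV::'a set"] by simp
  finally show ?thesis using B(4) by simp
qed

definition chi :: "nat \<Rightarrow> 'a::field \<Rightarrow> int" where
  "chi h x = (if trace2 h x = 0 then 1 else -1)"

lemma trace_zero[simp]: "trace2 h (0::'a::field) = 0"
  unfolding trace2_def by (simp add: power_0_left)

lemma chi_add:
  assumes "CARD('a::{field,finite}) = 2 ^ h"
  shows "chi h ((x::'a) + y) = chi h x * chi h y"
proof -
  have two: "(2::'a) = 0" by (rule two_eq_zero_card[OF assms])
  have t: "trace2 h (x + y) = trace2 h x + trace2 h y" by (rule trace_add[OF two])
  consider "trace2 h x = 0" | "trace2 h x = 1" using trace_01[OF assms] by blast
  then show ?thesis
  proof cases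
    case 1 then show ?thesis using t by (simp add: chi_def)
  next
    case 2
    consider "trace2 h y = 0" | "trace2 h y = 1" using trace_01[OF assms] by blast
    then show ?thesis
    proof cases
      case 1 then show ?thesis using t 2 by (simp add: chi_def)
    next
      case 3: 2
      have "trace2 h (x + y) = 0" using t 2 3 c2_add_self[OF two, of 1] by simp
      then show ?thesis using 2 3 by (simp add: chi_def)
    qed
  qed
qed

lemma chi_sq:
  assumes "CARD('a::{field,finite}) = 2 ^ h"
  shows "chi h ((x::'a)^2) = chi h x"
  unfolding chi_def trace_sq[OF assms] ..

lemma chi_zero[simp]: "chi h (0::'a::field) = 1" by (simp add: chi_def)

lemma chi_sqr1: "chi h x * chi h x = 1" by (simp add: chi_def)

lemma chi_exists_neg:
  assumes "CARD('a::{field,finite}) = 2 ^ h"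
  shows "\<exists>x::'a. chi h x = -1"
proof -
  obtain x :: 'a where "trace2 h x = 1" using trace_exists_one[OF assms] by blast
  then have "chi h x = -1" by (simp add: chi_def)
  then show ?thesis by blast
qed

lemma sum_translate: "(\<Sum>v\<in>UNIV. f (v + w)) = (\<Sum>v\<in>UNIV. f (v::'v::{ab_group_add,finite}))"
  by (rule sum.reindex_bij_witness[of _ "\<lambda>v. v - w" "\<lambda>v. v + w"]) auto

lemma sum_translate_sub:
  assumes "vec.subspace U" "w \<in> U"
  shows "(\<Sum>v\<in>U. f (v + w)) = (\<Sum>v\<in>U. f (v::'a::field^'n))"
  by (rule sum.reindex_bij_witness[of _ "\<lambda>v. v - w" "\<lambda>v. v + w"])
    (use assms in \<open>auto intro: vec.subspace_add vec.subspace_diff\<close>)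

lemma sum_chi_pairing_sub:
  fixes v :: "'a::{field,finite}^('m::finite+'m)"
  assumes card: "CARD('a) = 2 ^ h" and U: "vec.subspace U"
  shows "(\<Sum>u\<in>U. chi h (pairing v u)) = (if \<forall>u\<in>U. pairing v u = 0 then int (card U) else 0)"
proof (cases "\<forall>u\<in>U. pairing v u = 0")
  case True
  then show ?thesis by simp
next
  case False
  then obtain u0 where u0: "u0 \<in> U" "pairing v u0 \<noteq> 0" by blast
  obtain x1 :: 'a where x1: "chi h x1 = -1" using chi_exists_neg[OF card] by blast
  define w where "w = (x1 / pairing v u0) *s u0"
  have wU: "w \<in> U" unfolding w_def using U u0(1) by (simp add: vec.subspace_scale)
  have pw: "pairing v w = x1" unfolding w_def using u0(2) by (simp add: pairing_scale2)
  have "(\<Sum>u\<in>U. chi h (pairing v u)) = (\<Sum>u\<in>U. chi h (pairing v (u + w)))"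
    using sum_translate_sub[OF U wU, of "\<lambda>u. chi h (pairing v u)"] by simp
  also have "\<dots> = (\<Sum>u\<in>U. - chi h (pairing v u))"
    by (intro sum.cong) (simp_all add: pairing_add2 pw chi_add[OF card] x1)
  also have "\<dots> = - (\<Sum>u\<in>U. chi h (pairing v u))" by (simp add: sum_negf)
  finally have "(\<Sum>u\<in>U. chi h (pairing v u)) = 0" by simp
  then show ?thesis using False by (subst if_not_P) auto
qed

lemma sum_chi_pairing_all:
  fixes u :: "'a::{field,finite}^('m::finite+'m)"
  assumes card: "CARD('a) = 2 ^ h"
  shows "(\<Sum>v\<in>UNIV. chi h (pairing v u)) = (if u = 0 then int (CARD('a) ^ (2 * CARD('m))) else 0)"
proof -
  have "(\<Sum>v\<in>UNIV. chi h (pairing v u)) = (\<Sum>v\<in>UNIV. chi h (pairing u v))"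
    by (simp add: pairing_sym)
  also have "\<dots> = (if \<forall>v\<in>UNIV. pairing u v = 0 then int (card (UNIV::('a^('m+'m)) set)) else 0)"
    by (rule sum_chi_pairing_sub[OF card vec.subspace_UNIV])
  also have "\<dots> = (if u = 0 then int (CARD('a) ^ (2 * CARD('m))) else 0)"
    using pairing_nondeg[of u] by (auto simp: mult_2)
  finally show ?thesis .
qed

lemma lagrangian_sum:
  fixes a :: "'a::{field,finite}^('m::finite+'m)"
  assumes card: "CARD('a) = 2 ^ h" and U: "vec.subspace U"
    and cU: "card U = CARD('a) ^ CARD('m)" and Z: "\<forall>u\<in>U. theta a u = 0"
  shows "(\<Sum>v\<in>UNIV. chi h (theta a v)) = int (card U)"
proof -
  have two: "(2::'a) = 0" by (rule two_eq_zero_card[OF card])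
  define P where "P = {v. \<forall>u\<in>U. pairing v u = 0}"
  have inner: "(\<Sum>u\<in>U. chi h (pairing v u)) = (if v \<in> P then int (card U) else 0)" for v
    using sum_chi_pairing_sub[OF card U, of v] by (simp add: P_def)
  have UP: "U \<subseteq> P"
  proof
    fix v assume v: "v \<in> U"
    have "pairing v u = 0" if u: "u \<in> U" for u
    proof -
      have "theta a (v + u) = theta a v + theta a u + pairing v u" by (rule theta_add[OF two])
      then show ?thesis using Z v u vec.subspace_add[OF U v u] by simp
    qed
    then show "v \<in> P" by (simp add: P_def)
  qed
  have z: "0 \<in> U" using U by (simp add: vec.subspace_0)
  let ?N = "int (CARD('a) ^ (2 * CARD('m)))"
  have "(\<Sum>v\<in>UNIV. \<Sum>u\<in>U. chi h (pairing v u)) = (\<Sum>v\<in>UNIV. if v \<in> P then int (card U) else 0)"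
    by (simp add: inner)
  also have "\<dots> = int (card P) * int (card U)" by (simp add: sum.If_cases Int_absorb1)
  finally have d1: "(\<Sum>v\<in>UNIV. \<Sum>u\<in>U. chi h (pairing v u)) = int (card P) * int (card U)" .
  have "(\<Sum>v\<in>UNIV. \<Sum>u\<in>U. chi h (pairing v u)) = (\<Sum>u\<in>U. \<Sum>v\<in>UNIV. chi h (pairing v u))"
    by (rule sum.swap)
  also have "\<dots> = (\<Sum>u\<in>U. if u = 0 then ?N else 0)" by (simp add: sum_chi_pairing_all[OF card])
  also have "\<dots> = ?N" using z by (simp add: sum.delta)
  finally have "int (card P) * int (card U) = ?N" using d1 by simp
  then have "card P * card U = CARD('a) ^ CARD('m) * CARD('a) ^ CARD('m)"
    by (metis of_nat_eq_iff of_nat_mult power_add mult_2)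
  then have cP: "card P = card U" using cU by simp
  have PU: "P = U" using card_subset_eq[OF _ UP] cP finite by (metis finite_subset subset_UNIV)
  have "(\<Sum>v\<in>UNIV. chi h (theta a v)) * int (card U) = (\<Sum>u\<in>U. \<Sum>v\<in>UNIV. chi h (theta a v))"
    by (simp add: mult.commute)
  also have "\<dots> = (\<Sum>u\<in>U. \<Sum>v\<in>UNIV. chi h (theta a (v + u)))"
    by (rule sum.cong[OF refl]) (rule sum_translate[of "\<lambda>v. chi h (theta a v)", symmetric])
  also have "\<dots> = (\<Sum>u\<in>U. \<Sum>v\<in>UNIV. chi h (theta a v) * chi h (pairing v u))"
    by (intro sum.cong refl) (use Z in \<open>simp add: theta_add[OF two] chi_add[OF card]\<close>)
  also have "\<dots> = (\<Sum>v\<in>UNIV. chi h (theta a v) * (\<Sum>u\<in>U. chi h (pairing v u)))"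
    by (subst sum.swap) (simp add: sum_distrib_left)
  also have "\<dots> = (\<Sum>v\<in>UNIV. if v \<in> U then int (card U) else 0)"
    by (intro sum.cong refl) (use Z in \<open>simp add: inner PU\<close>)
  also have "\<dots> = int (card U) * int (card U)" by (simp add: sum.If_cases Int_absorb1)
  finally have "(\<Sum>v\<in>UNIV. chi h (theta a v)) * int (card U) = int (card U) * int (card U)" .
  moreover have "int (card U) \<noteq> 0" using cU by simp
  ultimately show ?thesis by (metis mult.commute mult_right_cancel)
qed

lemma sum_chi_theta_shift:
  fixes a :: "'a::{field,finite}^('m::finite+'m)"
  assumes card: "CARD('a) = 2 ^ h"
  shows "(\<Sum>v\<in>UNIV. chi h (theta0 (v::'a^('m+'m)))) = chi h (theta0 a) * (\<Sum>v\<in>UNIV. chi h (theta a v))"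
proof -
  have "(\<Sum>v\<in>UNIV. chi h (theta0 (v::'a^('m+'m)))) = (\<Sum>v\<in>UNIV. chi h (theta0 (v + a)))"
    by (rule sum_translate[of "\<lambda>v. chi h (theta0 v)" a, symmetric])
  also have "\<dots> = (\<Sum>v\<in>UNIV. chi h (theta0 a) * chi h (theta a v))"
    by (intro sum.cong refl)
      (simp add: theta0_add theta_def chi_add[OF card] chi_sq[OF card] pairing_sym[of a] mult_ac)
  also have "\<dots> = chi h (theta0 a) * (\<Sum>v\<in>UNIV. chi h (theta a v))" by (simp add: sum_distrib_left)
  finally show ?thesis .
qed

definition U0 :: "('a::field^('m::finite+'m)) set" where
  "U0 = {x. \<forall>i. i \<notin> range Inl \<longrightarrow> x$i = 0}"

lemma U0_subspace: "vec.subspace U0"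
  unfolding vec.subspace_def U0_def by auto

lemma U0_dim: "vec.dim (U0::('a::field^('m::finite+'m)) set) = CARD('m)"
  unfolding U0_def dim_substandard_cart by (simp add: card_image)

lemma U0_theta0: "u \<in> U0 \<Longrightarrow> theta0 u = 0"
proof -
  assume "u \<in> U0"
  then have A: "\<forall>i. i \<notin> range Inl \<longrightarrow> u $ i = 0" unfolding U0_def by simp
  have "u $ Inr k = 0" for k using A[rule_format, of "Inr k"] by auto
  then show ?thesis unfolding theta0_eq by simp
qed

lemma sum_chi_theta0:
  assumes card: "CARD('a::{field,finite}) = 2 ^ h"
  shows "(\<Sum>v\<in>UNIV. chi h (theta0 (v::'a^('m::finite+'m)))) = int (CARD('a) ^ CARD('m))"
proof -
  have cU: "card (U0::('a^('m+'m)) set) = CARD('a) ^ CARD('m)"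
    using card_subspace[OF U0_subspace] U0_dim by metis
  have "(\<Sum>v\<in>UNIV. chi h (theta 0 (v::'a^('m+'m)))) = int (card (U0::('a^('m+'m)) set))"
    by (rule lagrangian_sum[OF card U0_subspace cU]) (simp add: theta_zero_vec U0_theta0)
  then show ?thesis using cU by (simp add: theta_zero_vec)
qed

lemma no_lagrangian:
  fixes a :: "'a::{field,finite}^('m::finite+'m)"
  assumes card: "CARD('a) = 2 ^ h" and U: "vec.subspace U"
    and dU: "vec.dim U = CARD('m)" and Z: "\<forall>u\<in>U. theta a u = 0"
  shows "trace2 h (theta0 a) = 0"
proof -
  have cU: "card U = CARD('a) ^ CARD('m)" using card_subspace[OF U] dU by simp
  have s1: "(\<Sum>v\<in>UNIV. chi h (theta a v)) = int (CARD('a) ^ CARD('m))"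
    using lagrangian_sum[OF card U cU Z] cU by simp
  have "int (CARD('a) ^ CARD('m)) = chi h (theta0 a) * int (CARD('a) ^ CARD('m))"
    using sum_chi_theta_shift[OF card, of a] s1 sum_chi_theta0[OF card, where 'm='m] by simp
  then have "chi h (theta0 a) = 1" by simp
  then show ?thesis by (simp add: chi_def split: if_splits)
qed



lemma linearI_vec:
  fixes f :: "'a::field^'n \<Rightarrow> 'a^'k"
  assumes "\<And>x y. f (x + y) = f x + f y" "\<And>c x. f (c *s x) = c *s f x"
  shows "Vector_Spaces.linear (*s) (*s) f"
  by unfold_locales (use assms in auto)

definition emb :: "'a::field^('m::finite+'m) \<Rightarrow> 'a^('m+'m) \<Rightarrow> 'a^(('m+'m)+unit)" where
  "emb a u = (\<chi> j. case j of Inl i \<Rightarrow> u $ i | Inr _ \<Rightarrow> pairing a u)"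

definition proj :: "'a::field^(('m::finite+'m)+unit) \<Rightarrow> 'a^('m+'m)" where
  "proj w = (\<chi> i. w $ Inl i)"

definition ez :: "'a::field^(('m::finite+'m)+unit)" where
  "ez = axis (Inr ()) 1"

definition Hs :: "'a::field^('m::finite+'m) \<Rightarrow> ('a^(('m+'m)+unit)) set" where
  "Hs a = range (emb a)"

lemma proj_emb[simp]: "proj (emb a u) = u"
  by (simp add: proj_def emb_def vec_eq_iff)

lemma emb_z[simp]: "emb a u $ Inr t = pairing a u"
  by (simp add: emb_def)

lemma emb_Inl[simp]: "emb a u $ Inl i = u $ i"
  by (simp add: emb_def)

lemma proj_add[simp]: "proj (x + y) = proj x + proj y"
  by (simp add: proj_def vec_eq_iff)
lemma proj_scale[simp]: "proj (c *s x) = c *s proj x"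
  by (simp add: proj_def vec_eq_iff)
lemma proj_ez[simp]: "proj ez = 0"
  by (simp add: proj_def ez_def vec_eq_iff axis_def)
lemma ez_z[simp]: "ez $ Inr t = 1"
  by (simp add: ez_def axis_def)

lemma emb_add: "emb a (u + v) = emb a u + emb a v"
  by (simp add: emb_def vec_eq_iff pairing_add2 split: sum.split)
lemma emb_scale: "emb a (c *s u) = c *s emb a u"
  by (simp add: emb_def vec_eq_iff pairing_scale2 split: sum.split)

lemma emb_linear: "Vector_Spaces.linear (*s) (*s) (emb a)"
  by (rule linearI_vec) (simp_all add: emb_add emb_scale)

lemma emb_inj: "inj (emb a)"
  by (metis injI proj_emb)

lemma vec_eq_proj_z:
  fixes x y :: "'a::field^(('m::finite+'m)+unit)"
  assumes "proj x = proj y" "x $ Inr () = y $ Inr ()"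
  shows "x = y"
proof (rule vec_eq_iff[THEN iffD2], rule allI)
  fix j show "x $ j = y $ j"
  proof (cases j)
    case (Inl i) then show ?thesis using assms(1) by (simp add: proj_def vec_eq_iff)
  next
    case (Inr t) then show ?thesis using assms(2) by simp
  qed
qed

lemma Qpar_eq: "Qpar x = theta0 (proj x) + (x $ Inr ())^2"
  by (simp add: Qpar_def theta0_eq proj_def)

lemma Qpar_emb: "Qpar (emb a u) = theta a u"
  by (simp add: Qpar_eq theta_def)

lemma polar_Qpar:
  assumes two: "(2::'a::field) = 0"
  shows "polar Qpar x y = pairing (proj x) (proj (y::'a^(('m::finite+'m)+unit)))"
proof -
  have "polar Qpar x y = pairing (proj x) (proj y) + ((x $ Inr () + y $ Inr ())^2 - (x $ Inr ())^2 - (y $ Inr ())^2)"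
    by (simp add: polar_def Qpar_eq theta0_add algebra_simps)
  also have "(x $ Inr () + y $ Inr ())^2 - (x $ Inr ())^2 - (y $ Inr ())^2 = 0"
    by (simp add: c2_sq_add[OF two])
  finally show ?thesis by simp
qed

lemma Hs_subspace: "vec.subspace (Hs a)"
  unfolding Hs_def by (rule vec.linear_subspace_image[OF emb_linear vec.subspace_UNIV])

lemma dim_image_emb: "vec.dim (emb a ` S) = vec.dim S"
  by (rule vec.dim_image_eq[OF emb_linear]) (meson emb_inj inj_on_subset subset_UNIV)

lemma Hs_dim: "vec.dim (Hs (a::'a::field^('m::finite+'m))) = CARD('m+'m)"
  unfolding Hs_def dim_image_emb by (rule vec_dim_card)

lemma Hs_hyperplane: "hyperplane (Hs (a::'a::field^('m::finite+'m)))"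
  unfolding hyperplane_def using Hs_subspace[of a] Hs_dim[of a] by simp

lemma ez_notin_Hs: "ez \<notin> Hs a"
proof
  assume "ez \<in> Hs a"
  then obtain u where u: "ez = emb a u" unfolding Hs_def by blast
  then have "u = 0" using proj_emb[of a u] by simp
  then have "ez $ Inr () = (emb a 0) $ Inr ()" using u by simp
  then show False by simp
qed

lemma Hs_nucleus:
  assumes two: "(2::'a::field) = 0"
  shows "nucleus_not_in Qpar (Hs (a::'a^('m::finite+'m)))"
  unfolding nucleus_not_in_def
  by (intro exI[of _ ez]) (simp add: polar_Qpar[OF two] ez_notin_Hs)

lemma Hs_nonsing:
  assumes two: "(2::'a::field) = 0"
  shows "\<not> singular_on Qpar (Hs (a::'a^('m::finite+'m)))"
proof
  assume "singular_on Qpar (Hs a)"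
  then obtain x where x: "x \<in> Hs a" "x \<noteq> 0" "\<forall>w\<in>Hs a. polar Qpar x w = 0"
    unfolding singular_on_def by blast
  obtain u where u: "x = emb a u" using x(1) unfolding Hs_def by blast
  have "pairing u w = 0" for w
    using x(3)[rule_format, of "emb a w"] u by (simp add: Hs_def polar_Qpar[OF two])
  then have "u = 0" by (rule pairing_nondeg)
  then have "x = 0" using u emb_linear vec.linear_0 by (metis emb_scale scale_zero_left)
  then show False using x(2) by simp
qed



lemma c2_eq_iff: "(2::'a::comm_ring_1) = 0 \<Longrightarrow> (x + y = 0) \<longleftrightarrow> (x = (y::'a))"
  by (metis c2_minus add_eq_0_iff c2_add_self)

lemma pairing_diff2: "pairing w (u - v) = pairing w u - pairing w (v::'a::field^('m::finite+'m))"
  by (simp add: pairing_eq sum_subtractf[symmetric] algebra_simps)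

lemma perp_perp:
  fixes c u :: "'a::field^('m::finite+'m)"
  assumes c: "c \<noteq> 0" and P: "\<And>w. pairing c w = 0 \<Longrightarrow> pairing u w = 0"
  shows "\<exists>l. u = l *s c"
proof -
  define p where "p x j = pairing x (axis j 1)" for x :: "'a^('m+'m)" and j
  have cl: "x $ Inl k = p x (Inr k)" for x k by (simp add: p_def pairing_axis_Inr)
  have cr: "x $ Inr k = p x (Inl k)" for x k by (simp add: p_def pairing_axis_Inl)
  obtain i0 where i0: "p c i0 \<noteq> 0"
  proof (cases "\<exists>i0. p c i0 \<noteq> 0")
    case True then show ?thesis using that by blast
  next
    case False
    then have "c = 0"
      by (metis (no_types, opaque_lifting) cl cr sum.exhaust vec_eq_iff zero_index)
    then show ?thesis using c by simp
  qed
  have pj: "p u j * p c i0 = p c j * p u i0" for j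
  proof -
    define w where "w = (p c i0) *s axis j 1 - (p c j) *s axis i0 (1::'a)"
    have pw: "pairing x w = p c i0 * p x j - p c j * p x i0" for x
      unfolding w_def p_def by (simp add: pairing_diff2 pairing_scale2)
    have "pairing c w = 0" using pw[of c] by (simp add: mult.commute)
    then have "pairing u w = 0" by (rule P)
    then show ?thesis using pw[of u] by (simp add: mult.commute)
  qed
  define l where "l = p u i0 / p c i0"
  have "p u j = l * p c j" for j using pj[of j] i0 unfolding l_def by (simp add: field_simps)
  then have "u = l *s c"
    by (metis (no_types, opaque_lifting) cl cr sum.exhaust vec_eq_iff vector_smult_component)
  then show ?thesis by blast
qed

lemma Hs_Int:
  fixes a b :: "'a::field^('m::finite+'m)"
  assumes two: "(2::'a) = 0"
  shows "Hs a \<inter> Hs b = emb a ` {u. pairing (a + b) u = 0}" (is "_ = emb a ` ?C")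
  proof
    show "Hs a \<inter> Hs b \<subseteq> emb a ` ?C"
    proof
      fix x assume "x \<in> Hs a \<inter> Hs b"
      then obtain u v where uv: "x = emb a u" "x = emb b v" unfolding Hs_def by blast
      then have "u = v" by (metis proj_emb)
      then have "pairing a u = pairing b u" using uv by (metis emb_z)
      then have "pairing (a + b) u = 0" by (simp add: pairing_add1 c2_add_self[OF two])
      then show "x \<in> emb a ` ?C" using uv by blast
    qed
  next
    show "emb a ` ?C \<subseteq> Hs a \<inter> Hs b"
    proof
      fix x assume "x \<in> emb a ` ?C"
      then obtain u where u: "x = emb a u" "pairing (a + b) u = 0" by blast
      then have "pairing a u = pairing b u" by (simp add: pairing_add1 c2_eq_iff[OF two])
      then have "emb a u = emb b u" by (intro vec_eq_proj_z) simp_all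
      then show "x \<in> Hs a \<inter> Hs b" using u unfolding Hs_def by (metis IntI rangeI)
    qed
  qed

lemma emb_zero_iff: "emb a u = 0 \<longleftrightarrow> u = 0"
proof
  assume "emb a u = 0"
  then have "proj (emb a u) = proj 0" by simp
  then show "u = 0" by (simp add: proj_def vec_eq_iff)
next
  assume "u = 0"
  then show "emb a u = 0" unfolding \<open>u = 0\<close> by (simp add: vec_eq_iff emb_def split: sum.split)
qed

lemma Hs_adj:
  assumes two: "(2::'a::field) = 0"
  shows "NO_adj (Hs a) (Hs b) \<longleftrightarrow> (theta a (a + b) = 0 \<and> a \<noteq> (b::'a^('m::finite+'m)))"
proof -
  let ?C = "{u. pairing (a + b) u = 0}"
  have "NO_adj (Hs a) (Hs b) \<longleftrightarrow> (\<exists>u\<in>?C. u \<noteq> 0 \<and> theta a u = 0 \<and> (\<forall>w\<in>?C. pairing u w = 0))"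
    unfolding NO_adj_def Hs_Int[OF two] singular_on_def
    by (simp add: emb_zero_iff Qpar_emb polar_Qpar[OF two])
  also have "\<dots> \<longleftrightarrow> (theta a (a + b) = 0 \<and> a \<noteq> b)"
  proof
    assume "\<exists>u\<in>?C. u \<noteq> 0 \<and> theta a u = 0 \<and> (\<forall>w\<in>?C. pairing u w = 0)"
    then obtain u where u: "pairing (a + b) u = 0" "u \<noteq> 0" "theta a u = 0" "\<forall>w\<in>?C. pairing u w = 0"
      by blast
    have ab: "a \<noteq> b"
    proof
      assume "a = b"
      then have "a + b = 0" by (simp add: vec_eq_iff c2_add_self[OF two])
      then have "pairing u w = 0" for w using u(4) by simp
      then have "u = 0" by (rule pairing_nondeg)
      then show False using u(2) by simp
    qed
    have c0: "a + b \<noteq> 0"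
    proof
      assume "a + b = 0"
      then have "a = b" by (simp add: vec_eq_iff c2_eq_iff[OF two])
      then show False using ab by simp
    qed
    obtain l where l: "u = l *s (a + b)" using perp_perp[OF c0, of u] u(4) by blast
    have "l \<noteq> 0" using u(2) l by auto
    moreover have "l^2 * theta a (a + b) = 0" using u(3) l theta_scale by metis
    ultimately have "theta a (a + b) = 0" by simp
    then show "theta a (a + b) = 0 \<and> a \<noteq> b" using ab by simp
  next
    assume A: "theta a (a + b) = 0 \<and> a \<noteq> b"
    have c0: "a + b \<noteq> 0"
    proof
      assume "a + b = 0"
      then have "a = b" by (simp add: vec_eq_iff c2_eq_iff[OF two])
      then show False using A by simp
    qed
    show "\<exists>u\<in>?C. u \<noteq> 0 \<and> theta a u = 0 \<and> (\<forall>w\<in>?C. pairing u w = 0)"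
      using A c0 pairing_self[OF two, of "a + b"] by (intro bexI[of _ "a + b"]) auto
  qed
  finally show ?thesis .
qed



lemma tsd_neg_upper:
  fixes a :: "'a::{field,finite}^('m::finite+'m)"
  assumes card: "CARD('a) = 2 ^ h" and T: "totally_singular_dim Qpar (Hs a) CARD('m)"
  shows "trace2 h (theta0 a) = 0"
proof -
  obtain U where U: "vec.subspace U" "U \<subseteq> Hs a" "vec.dim U = CARD('m)" "\<forall>u\<in>U. Qpar u = 0"
    using T unfolding totally_singular_dim_def by blast
  define U' where "U' = {u. emb a u \<in> U}"
  have sU': "vec.subspace U'"
    unfolding U'_def vec.subspace_def using U(1)
    by (auto simp: emb_add emb_scale vec.subspace_add vec.subspace_scale vec.subspace_0
        emb_zero_iff[of a 0, simplified])
  have img: "emb a ` U' = U" using U(2) unfolding U'_def Hs_def by auto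
  have dU': "vec.dim U' = CARD('m)" using dim_image_emb[of a U'] img U(3) by simp
  have "\<forall>u\<in>U'. theta a u = 0" using U(4) unfolding U'_def by (simp add: Qpar_emb[symmetric])
  then show ?thesis by (rule no_lagrangian[OF card sU' dU'])
qed

lemma tsd_pos:
  fixes a :: "'a::{field,finite}^('m::finite+'m)"
  assumes card: "CARD('a) = 2 ^ h" and tr: "trace2 h (theta0 a) = 0"
  shows "totally_singular_dim Qpar (Hs a) CARD('m)"
proof -
  have two: "(2::'a) = 0" by (rule two_eq_zero_card[OF card])
  let ?t = "theta0 a"
  obtain \<mu> where mu: "\<mu>^2 + \<mu> = ?t" using trace_zero_AS[OF card tr] by blast
  obtain l where l: "l + l^2 * ?t = 1"
  proof (cases "?t = 0")
    case True then show ?thesis using that[of 1] by simp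
  next
    case False
    have "\<mu>/?t + (\<mu>/?t)^2 * ?t = (\<mu>^2 + \<mu>) / ?t" using False
      by (simp add: field_simps power2_eq_square)
    also have "\<dots> = 1" using mu False by simp
    finally show ?thesis using that by blast
  qed
  define T where "T u = u + (l * pairing a u) *s a" for u
  have pa: "pairing a (T u) = pairing a u" for u
    unfolding T_def by (simp add: pairing_add2 pairing_scale2 pairing_self[OF two])
  have TT: "T (T u) = u" for u
  proof -
    have "T (T u) = T u + (l * pairing a (T u)) *s a" by (rule T_def)
    also have "\<dots> = u + ((l * pairing a u) *s a + (l * pairing a u) *s a)"
      unfolding pa by (simp add: T_def add.assoc)
    finally have "T (T u) = u + ((l * pairing a u) *s a + (l * pairing a u) *s a)" .
    also have "(l * pairing a u) *s a + (l * pairing a u) *s a = 0"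
      by (metis c2_add_self[OF two] vector_sadd_rdistrib vector_smult_lzero)
    finally show ?thesis by simp
  qed
  have thT: "theta0 (T u) = theta a u" for u
  proof -
    have "theta0 (T u) = theta0 u + (l * pairing a u)^2 * ?t + (l * pairing a u) * pairing a u"
      unfolding T_def by (simp add: theta0_add theta0_scale pairing_scale2 pairing_sym[of u a])
    also have "\<dots> = theta0 u + (pairing a u)^2 * (l + l^2 * ?t)"
      by (simp add: algebra_simps power2_eq_square)
    also have "\<dots> = theta a u" using l by (simp add: theta_def)
    finally show ?thesis .
  qed
  have linT: "Vector_Spaces.linear (*s) (*s) T"
    by (rule linearI_vec) (simp_all add: T_def pairing_add2 pairing_scale2 vec_eq_iff algebra_simps)
  have injT: "inj T" by (metis TT injI)
  define U where "U = emb a ` (T ` U0)"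
  have sU: "vec.subspace U" unfolding U_def
    by (rule vec.linear_subspace_image[OF emb_linear vec.linear_subspace_image[OF linT U0_subspace]])
  have dU: "vec.dim U = CARD('m)" unfolding U_def dim_image_emb
    using vec.dim_image_eq[OF linT, of U0] injT U0_dim[where 'm='m and 'a='a] by (metis inj_on_subset subset_UNIV)
  have UH: "U \<subseteq> Hs a" unfolding U_def Hs_def by auto
  have Z: "\<forall>u\<in>U. Qpar u = 0"
    unfolding U_def by (auto simp: Qpar_emb thT[symmetric] TT U0_theta0)
  show ?thesis unfolding totally_singular_dim_def using sU UH dU Z by blast
qed

lemma tsd_neg_lower:
  fixes a :: "'a::{field,finite}^('m::finite+'m)"
  assumes card: "CARD('a) = 2 ^ h" and tr: "trace2 h (theta0 a) \<noteq> 0"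
  shows "totally_singular_dim Qpar (Hs a) (CARD('m) - 1)"
proof -
  have sU0: "vec.subspace (U0::('a^('m+'m)) set)" by (rule U0_subspace)
  define K where "K = {u \<in> U0. pairing a u = 0}"
  have sK: "vec.subspace K" unfolding K_def using U0_subspace
    by (auto simp: vec.subspace_def pairing_add2 pairing_scale2)
  have ZK: "\<forall>u\<in>K. theta a u = 0" unfolding K_def by (simp add: theta_def U0_theta0)
  have dKle: "vec.dim K \<le> CARD('m)"
    using vec.dim_subset[of K U0] U0_dim[where 'm='m and 'a='a] by (auto simp: K_def)
  have dKne: "vec.dim K \<noteq> CARD('m)"
    using no_lagrangian[OF card sK _ ZK] tr by blast
  obtain v0 where v0: "v0 \<in> U0" "pairing a v0 \<noteq> 0"
  proof (cases "\<exists>v0\<in>U0. pairing a v0 \<noteq> 0")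
    case True then show ?thesis using that by blast
  next
    case False
    then have "K = U0" unfolding K_def by auto
    then show ?thesis using dKne U0_dim[where 'm='m and 'a='a] by simp
  qed
  have "U0 \<subseteq> vec.span (insert v0 K)"
  proof
    fix u :: "'a^('m+'m)" assume u: "u \<in> U0"
    define k where "k = pairing a u / pairing a v0"
    have "k *s v0 \<in> U0" by (rule vec.subspace_scale[OF sU0 v0(1)])
    then have "u - k *s v0 \<in> U0" by (rule vec.subspace_diff[OF sU0 u])
    moreover have "pairing a (u - k *s v0) = 0" using v0(2)
      by (simp add: k_def pairing_diff2 pairing_scale2)
    ultimately have "u - k *s v0 \<in> K" unfolding K_def by simp
    then have "u - k *s v0 \<in> vec.span K" by (rule vec.span_base)
    then show "u \<in> vec.span (insert v0 K)" using vec.span_breakdown_eq by blast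
  qed
  note dsub = vec.dim_subset[OF this]
  have "vec.dim (U0::('a^('m+'m)) set) \<le> vec.dim (insert v0 K)" using dsub by simp
  also have "\<dots> \<le> vec.dim K + 1" by (simp add: vec.dim_insert)
  finally have dK: "vec.dim K = CARD('m) - 1" using U0_dim[where 'm='m and 'a='a] dKle dKne by simp
  have sU: "vec.subspace (emb a ` K)"
    by (rule vec.linear_subspace_image[OF emb_linear sK])
  have UH: "emb a ` K \<subseteq> Hs a" unfolding Hs_def by auto
  have Z: "\<forall>u\<in>emb a ` K. Qpar u = 0" using ZK by (auto simp: Qpar_emb)
  show ?thesis unfolding totally_singular_dim_def
    using sU UH Z dK dim_image_emb[of a K] by metis
qed

lemma Hs_inj: "Hs a = Hs b \<Longrightarrow> a = (b::'a::field^('m::finite+'m))"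
proof -
  assume e: "Hs a = Hs b"
  have "pairing a u = pairing b u" for u
  proof -
    have "emb a u \<in> Hs b" using e unfolding Hs_def by auto
    then obtain v where "emb a u = emb b v" unfolding Hs_def by blast
    then show ?thesis by (metis emb_z proj_emb)
  qed
  then show ?thesis by (rule pairing_determines)
qed



lemma proj_linear: "Vector_Spaces.linear (*s) (*s) (proj :: 'a::field^(('m::finite+'m)+unit) \<Rightarrow> _)"
  by (rule linearI_vec) simp_all

lemma proj_diff[simp]: "proj (x - y) = proj x - proj y"
  by (simp add: proj_def vec_eq_iff)

lemma hyp_char:
  fixes H :: "('a::field^(('m::finite+'m)+unit)) set"
  assumes two: "(2::'a) = 0" and hyp: "hyperplane H" and nuc: "nucleus_not_in Qpar H"
  shows "\<exists>a. H = Hs a"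
proof -
  have sH: "vec.subspace H" and dH: "vec.dim H = CARD(('m+'m)+unit) - 1"
    using hyp unfolding hyperplane_def by auto
  obtain n where n: "\<forall>w. polar Qpar n w = 0" "n \<notin> H"
    using nuc unfolding nucleus_not_in_def by blast
  have "pairing (proj n) v = 0" for v
    using n(1)[rule_format, of "emb 0 v"] by (simp add: polar_Qpar[OF two])
  then have pn: "proj n = 0" by (rule pairing_nondeg)
  have nez: "n = (n $ Inr ()) *s ez" by (rule vec_eq_proj_z) (simp_all add: pn)
  have ezH: "ez \<notin> H"
  proof
    assume "ez \<in> H"
    then have "(n $ Inr ()) *s ez \<in> H" using sH by (simp add: vec.subspace_scale)
    then show False using nez n(2) by simp
  qed
  have injp: "inj_on proj H"
  proof (rule inj_onI)
    fix x y assume x: "x \<in> H" and y: "y \<in> H" and e: "proj x = proj y"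
    define d where "d = x - y"
    have dH': "d \<in> H" unfolding d_def using sH x y by (simp add: vec.subspace_diff)
    have pd: "proj d = 0" unfolding d_def using e by simp
    have dd: "d = (d $ Inr ()) *s ez" by (rule vec_eq_proj_z) (simp_all add: pd)
    have "d $ Inr () = 0"
    proof (rule ccontr)
      assume nz: "d $ Inr () \<noteq> 0"
      have "(1 / d $ Inr ()) *s d \<in> H" using sH dH' by (simp add: vec.subspace_scale)
      also have "(1 / d $ Inr ()) *s d = ez" using nz by (subst dd) (simp add: vector_smult_assoc)
      finally show False using ezH by simp
    qed
    then have "d = 0" using dd by simp
    then show "x = y" unfolding d_def by simp
  qed
  have spanH: "vec.span H = H" using sH by (simp add: vec.span_eq_iff)
  have dP: "vec.dim (proj ` H) = CARD('m+'m)"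
    using vec.dim_image_eq[OF proj_linear, of H] injp spanH dH by simp
  have sP: "vec.subspace (proj ` H)" by (rule vec.linear_subspace_image[OF proj_linear sH])
  have surjp: "proj ` H = UNIV"
    by (rule vec.subspace_dim_equal[OF sP vec.subspace_UNIV subset_UNIV]) (simp add: dP vec_dim_card card_cart_basis)
  define G where "G v = (THE h. h \<in> H \<and> proj h = v)" for v
  have ex1: "\<exists>!h. h \<in> H \<and> proj h = v" for v
  proof -
    have "v \<in> proj ` H" using surjp by simp
    then obtain h where "h \<in> H" "proj h = v" by blast
    then show ?thesis using injp by (auto dest: inj_onD)
  qed
  have G: "G v \<in> H \<and> proj (G v) = v" for v unfolding G_def by (rule theI'[OF ex1])
  have Gu: "G v = h" if "h \<in> H" "proj h = v" for h v
    unfolding G_def by (rule the1_equality[OF ex1]) (use that in blast)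
  have Gadd: "G (u + v) = G u + G v" for u v
    by (rule Gu) (use G sH in \<open>auto simp: vec.subspace_add\<close>)
  have Gscale: "G (c *s v) = c *s G v" for c v
    by (rule Gu) (use G sH in \<open>auto simp: vec.subspace_scale\<close>)
  have linG: "Vector_Spaces.linear (*s) (*s) G" by (rule linearI_vec) (simp_all add: Gadd Gscale)
  define a :: "'a^('m+'m)" where
    "a = (\<chi> i. case i of Inl k \<Rightarrow> G (axis (Inr k) 1) $ Inr () | Inr k \<Rightarrow> G (axis (Inl k) 1) $ Inr ())"
  have ga: "G v $ Inr () = pairing a v" for v
  proof -
    have "G v $ Inr () = (\<Sum>i\<in>UNIV. v $ i * G (axis i 1) $ Inr ())"
      by (rule linear_componentwise[OF linG])
    also have "\<dots> = (\<Sum>k\<in>UNIV. v $ Inl k * G (axis (Inl k) 1) $ Inr ()) + (\<Sum>k\<in>UNIV. v $ Inr k * G (axis (Inr k) 1) $ Inr ())"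
      by (rule sum_UNIV_plus)
    also have "\<dots> = (\<Sum>k\<in>UNIV. v $ Inl k * G (axis (Inl k) 1) $ Inr () + v $ Inr k * G (axis (Inr k) 1) $ Inr ())"
      by (rule sum.distrib[symmetric])
    also have "\<dots> = pairing a v"
      unfolding pairing_eq by (intro sum.cong refl) (simp add: a_def algebra_simps)
    finally show ?thesis .
  qed
  have Gemb: "G v = emb a v" for v
    by (rule vec_eq_proj_z) (simp_all add: G ga)
  have "H = Hs a"
  proof
    show "H \<subseteq> Hs a"
    proof
      fix h assume "h \<in> H"
      then have "h = G (proj h)" using Gu by simp
      then show "h \<in> Hs a" unfolding Hs_def Gemb by blast
    qed
  next
    show "Hs a \<subseteq> H"
    proof
      fix x assume "x \<in> Hs a"
      then obtain v where "x = emb a v" unfolding Hs_def by blast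
      then have "x = G v" using Gemb by simp
      then show "x \<in> H" using G by simp
    qed
  qed
  then show ?thesis by blast
qed

theorem lemma3p4:
  fixes h :: nat and s :: bool
  assumes "CARD('a::{field,finite}) = 2 ^ h"
  shows "graph_iso (Wset h s :: ('a ^ ('m::finite + 'm)) set) (Fedges h s)
                   (NO_vertices s :: ('a ^ (('m + 'm) + unit)) set set) NO_adj"
proof -
  note card = assms
  have two: "(2::'a) = 0" by (rule two_eq_zero_card[OF card])
  have vert: "Hs a \<in> NO_vertices s \<longleftrightarrow> a \<in> Wset h s" for a :: "'a^('m+'m)"
  proof -
    have "Hs a \<in> NO_vertices s \<longleftrightarrow> quadric_type Qpar (Hs a) CARD('m) s"
      unfolding NO_vertices_def using Hs_hyperplane[of a] Hs_nucleus[OF two, of a] Hs_nonsing[OF two, of a]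
      by simp
    also have "\<dots> \<longleftrightarrow> a \<in> Wset h s"
    proof (cases "trace2 h (theta0 a) = 0")
      case True
      then have "totally_singular_dim Qpar (Hs a) CARD('m)" by (rule tsd_pos[OF card])
      then show ?thesis using True by (simp add: quadric_type_def Wset_def)
    next
      case False
      then have t1: "trace2 h (theta0 a) = 1" using trace_01[OF card] by blast
      have "\<not> totally_singular_dim Qpar (Hs a) CARD('m)" using tsd_neg_upper[OF card, of a] False by blast
      moreover have "totally_singular_dim Qpar (Hs a) (CARD('m) - 1)" by (rule tsd_neg_lower[OF card False])
      ultimately show ?thesis using t1 by (simp add: quadric_type_def Wset_def)
    qed
    finally show ?thesis .
  qed
  have bij: "bij_betw Hs (Wset h s :: ('a ^ ('m + 'm)) set) (NO_vertices s)"
    unfolding bij_betw_def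
  proof
    show "inj_on Hs (Wset h s :: ('a ^ ('m + 'm)) set)" by (meson Hs_inj inj_onI)
    show "Hs ` (Wset h s :: ('a ^ ('m + 'm)) set) = NO_vertices s"
    proof
      show "Hs ` (Wset h s :: ('a ^ ('m + 'm)) set) \<subseteq> NO_vertices s"
      proof
        fix x assume "x \<in> Hs ` (Wset h s :: ('a ^ ('m + 'm)) set)"
        then obtain a :: "'a^('m+'m)" where "a \<in> Wset h s" "x = Hs a" by blast
        then show "x \<in> (NO_vertices s :: ('a ^ (('m + 'm) + unit)) set set)" using vert[of a] by simp
      qed
    next
      show "NO_vertices s \<subseteq> Hs ` (Wset h s :: ('a ^ ('m + 'm)) set)"
      proof
        fix H :: "('a ^ (('m + 'm) + unit)) set" assume H: "H \<in> NO_vertices s"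
        then have "hyperplane H" "nucleus_not_in Qpar H" unfolding NO_vertices_def by auto
        then obtain a :: "'a^('m+'m)" where a: "H = Hs a" using hyp_char[OF two] by blast
        then have "a \<in> Wset h s" using vert H by blast
        then show "H \<in> Hs ` (Wset h s :: ('a ^ ('m + 'm)) set)" using a by blast
      qed
    qed
  qed
  have edges: "\<forall>a\<in>(Wset h s :: ('a ^ ('m + 'm)) set). \<forall>b\<in>Wset h s. (a, b) \<in> Fedges h s \<longleftrightarrow> NO_adj (Hs a) (Hs b)"
    unfolding Fedges_def by (simp add: Hs_adj[OF two])
  show ?thesis unfolding graph_iso_def using bij edges by blast
qed

end
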